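(* Let $\mathsf{T}_2:S_2\to S_2$ be a universal Turing machine, in the sense that for every Turing machine $\mathsf{T}_1:S_1\to S_1$ there exist $\tau$ and $t(n)$ such that $\mathsf{T}_2$ $(\tau,t(n))$-simulates $\mathsf{T}_1$. Then there is a configuration $s\in S_2$ which is non-halting and which is a periodic point of $\mathsf{T}_2$. Moreover, for every $N$ there is an $L\gg 0$ such that $\mathsf{T}_2$ has at least $N$ distinct periodic orbits of period $L$.
   Context: A Turing machine is given by a finite state set $Q$ (containing a start state $q_0$ and at least one halt state), a finite tape alphabet $\Gamma$ (with a blank symbol $\sqcup$) and a transition function; its configuration set $S=\Gamma^*\times Q\times\Gamma^*$ consists of finite strings $x_1\cdots x_{m-1}\,q\,x_m\cdots x_n$ recording the tape contents, the head position and the current state, and the machine is viewed as the one-step map $\mathsf{T}:S\to S$. A configuration is halting if its state is a halt state. Given Turing machines $\mathsf{T}_1:S_1\to S_1$, $\mathsf{T}_2:S_2\to S_2$, we say $\mathsf{T}_2$ $(\tau,t(n))$-simulates $\mathsf{T}_1$ if there exist: an encoder $\mathcal E:S_1\to S_2$ computed by a 2-tape Turing machine in time $O(t(|s|))$; a partial decoder $\mathcal D:S_2\rightharpoonup S_1$ computed by a 2-tape Turing machine which, on an input in its domain, halts in time $O(t(|\mathcal D(x)|))$ with the output written on one tape and the input tape erased; and a slowdown function $\tau:S_2\rightharpoonup\mathbb Z_{\ge 0}$ defined exactly on the domain of $\mathcal D$, computable by a Turing machine; such that, with $C_s:=\mathcal D^{-1}(s)$ and $\mathsf{T}_2^\tau(x):=\mathsf{T}_2^{\tau(x)}(x)$,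 we have $\mathcal E(s)\in C_s$ and $\mathcal D(\mathsf{T}_2^\tau(C_s))=\{\mathsf{T}_1(s)\}$ for all $s\in S_1$. *)

theory Defs
  imports Main
begin

datatype dir = MoveL | MoveR

record tm =
  states   :: "nat set"
  symbols  :: "nat set"
  blank    :: nat
  start    :: nat
  halting  :: "nat set"
  delta    :: "nat \<Rightarrow> nat \<Rightarrow> nat \<times> nat \<times> dir"

definition tm_wf :: "tm \<Rightarrow> bool" where
  "tm_wf M \<longleftrightarrow> finite (states M) \<and> finite (symbols M) \<and> blank M \<in> symbols M
     \<and> start M \<in> states M \<and> halting M \<subseteq> states M \<and> halting M \<noteq> {}
     \<and> (\<forall>q \<in> states M - halting M. \<forall>a \<in> symbols M.
           fst (delta M q a) \<in> states M \<and> fst (snd (delta M q a)) \<in> symbols M)"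

text \<open>A configuration x_1 ... x_(m-1) q x_m ... x_n is the triple
  ([x_1,...,x_(m-1)], q, [x_m,...,x_n]) (left part in normal order); the head reads x_m,
  or the blank if the right part is empty.\<close>
type_synonym config = "nat list \<times> nat \<times> nat list"

definition configs :: "tm \<Rightarrow> config set" where
  "configs M = {(l, q, r). set l \<subseteq> symbols M \<and> q \<in> states M \<and> set r \<subseteq> symbols M}"

definition csize :: "config \<Rightarrow> nat" where
  "csize s = (case s of (l, q, r) \<Rightarrow> length l + 1 + length r)"

definition is_halting :: "tm \<Rightarrow> config \<Rightarrow> bool" where
  "is_halting M s \<longleftrightarrow> fst (snd s) \<in> halting M"

text \<open>One-step map T : S \<rightarrow> S (halting configurations are fixed; the tape is two-way
  infinite, so moving off either end extends the string by a blank).\<close>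
definition step :: "tm \<Rightarrow> config \<Rightarrow> config" where
  "step M s = (case s of (l, q, r) \<Rightarrow>
     if q \<in> halting M then (l, q, r) else
     (let a = (case r of [] \<Rightarrow> blank M | x # _ \<Rightarrow> x);
          (q', b, d) = delta M q a
      in case d of
           MoveR \<Rightarrow> (l @ [b], q', tl r)
         | MoveL \<Rightarrow> (if l = [] then ([], q', blank M # b # tl r)
                     else (butlast l, q', last l # b # tl r))))"

definition orbit :: "tm \<Rightarrow> config \<Rightarrow> config set" where
  "orbit M s = {(step M ^^ k) s | k. True}"

text \<open>Tape symbols of auxiliary machines: Tp g and St q encode tape symbols and states of
  the simulated machines' configurations; Wk n are working symbols, Wk 0 is the blank.\<close>
datatype csym = Tp nat | St nat | Wk nat

abbreviation bl :: csym where "bl \<equiv> Wk 0"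

record tm2 =
  states2  :: "nat set"
  alph2    :: "csym set"
  start2   :: nat
  halting2 :: "nat set"
  delta2   :: "nat \<Rightarrow> csym \<Rightarrow> csym \<Rightarrow> nat \<times> csym \<times> csym \<times> dir \<times> dir"

definition tm2_wf :: "tm2 \<Rightarrow> bool" where
  "tm2_wf M \<longleftrightarrow> finite (states2 M) \<and> finite (alph2 M) \<and> bl \<in> alph2 M
     \<and> start2 M \<in> states2 M \<and> halting2 M \<subseteq> states2 M \<and> halting2 M \<noteq> {}
     \<and> (\<forall>q \<in> states2 M - halting2 M. \<forall>a \<in> alph2 M. \<forall>b \<in> alph2 M.
          (case delta2 M q a b of (q', a', b', d1, d2) \<Rightarrow>
             q' \<in> states2 M \<and> a' \<in> alph2 M \<and> b' \<in> alph2 M))"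

text \<open>A tape is (reversed part left of the head, part from the head on).\<close>
type_synonym tape = "csym list \<times> csym list"

definition tread :: "tape \<Rightarrow> csym" where
  "tread t = (case snd t of [] \<Rightarrow> bl | x # _ \<Rightarrow> x)"

definition tmove :: "dir \<Rightarrow> csym \<Rightarrow> tape \<Rightarrow> tape" where
  "tmove d b t = (case t of (l, r) \<Rightarrow> (case d of
       MoveR \<Rightarrow> (b # l, tl r)
     | MoveL \<Rightarrow> (tl l, (case l of [] \<Rightarrow> bl | x # _ \<Rightarrow> x) # b # tl r)))"

definition trim :: "csym list \<Rightarrow> csym list" where
  "trim w = rev (dropWhile (\<lambda>x. x = bl) (rev (dropWhile (\<lambda>x. x = bl) w)))"

definition content :: "tape \<Rightarrow> csym list" where
  "content t = trim (rev (fst t) @ snd t)"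

type_synonym config2 = "nat \<times> tape \<times> tape"

definition step2 :: "tm2 \<Rightarrow> config2 \<Rightarrow> config2" where
  "step2 M c = (case c of (q, t1, t2) \<Rightarrow>
     if q \<in> halting2 M then (q, t1, t2) else
     (case delta2 M q (tread t1) (tread t2) of (q', b1, b2, d1, d2) \<Rightarrow>
        (q', tmove d1 b1 t1, tmove d2 b2 t2)))"

definition init2 :: "tm2 \<Rightarrow> csym list \<Rightarrow> config2" where
  "init2 M w = (start2 M, ([], w), ([], []))"

definition runs_within :: "tm2 \<Rightarrow> csym list \<Rightarrow> nat \<Rightarrow> csym list \<Rightarrow> bool \<Rightarrow> bool" where
  "runs_within M w k out erase \<longleftrightarrow>
     (\<exists>j \<le> k. (case (step2 M ^^ j) (init2 M w) of (q, t1, t2) \<Rightarrow>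
        q \<in> halting2 M \<and> content t2 = out \<and> (erase \<longrightarrow> content t1 = [])))"

definition cword :: "config \<Rightarrow> csym list" where
  "cword s = (case s of (l, q, r) \<Rightarrow> map Tp l @ St q # map Tp r)"

definition nword :: "nat \<Rightarrow> csym list" where
  "nword n = replicate n (Wk 1)"

definition encoder_ok :: "tm \<Rightarrow> (config \<Rightarrow> config) \<Rightarrow> (nat \<Rightarrow> nat) \<Rightarrow> bool" where
  "encoder_ok T1 E t \<longleftrightarrow> (\<exists>M. tm2_wf M
     \<and> (\<forall>s \<in> configs T1. set (cword s) \<subseteq> alph2 M \<and> (\<exists>k. runs_within M (cword s) k (cword (E s)) False))
     \<and> (\<exists>c n0. \<forall>s \<in> configs T1. csize s \<ge> n0 \<longrightarrow>
            runs_within M (cword s) (c * t (csize s)) (cword (E s)) False))"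

definition decoder_ok :: "(config \<Rightarrow> config option) \<Rightarrow> (nat \<Rightarrow> nat) \<Rightarrow> bool" where
  "decoder_ok D t \<longleftrightarrow> (\<exists>M. tm2_wf M
     \<and> (\<forall>x \<in> dom D. set (cword x) \<subseteq> alph2 M \<and> (\<exists>k. runs_within M (cword x) k (cword (the (D x))) True))
     \<and> (\<exists>c n0. \<forall>x \<in> dom D. csize (the (D x)) \<ge> n0 \<longrightarrow>
            runs_within M (cword x) (c * t (csize (the (D x)))) (cword (the (D x))) True))"

definition computable_pfun :: "(config \<Rightarrow> nat option) \<Rightarrow> bool" where
  "computable_pfun f \<longleftrightarrow> (\<exists>M. tm2_wf M
     \<and> (\<forall>x \<in> dom f. set (cword x) \<subseteq> alph2 M \<and> (\<exists>k. runs_within M (cword x) k (nword (the (f x))) False)))"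

definition simulates :: "tm \<Rightarrow> tm \<Rightarrow> (config \<Rightarrow> nat option) \<Rightarrow> (nat \<Rightarrow> nat) \<Rightarrow> bool" where
  "simulates T2 T1 \<tau> t \<longleftrightarrow> (\<exists>E D.
      (\<forall>s \<in> configs T1. E s \<in> configs T2) \<and> encoder_ok T1 E t
    \<and> dom D \<subseteq> configs T2 \<and> ran D \<subseteq> configs T1 \<and> decoder_ok D t
    \<and> dom \<tau> = dom D \<and> computable_pfun \<tau>
    \<and> (\<forall>s \<in> configs T1. D (E s) = Some s
         \<and> (\<forall>x. D x = Some s \<longrightarrow> D ((step T2 ^^ the (\<tau> x)) x) = Some (step T1 s))))"

definition universal :: "tm \<Rightarrow> bool" where
  "universal T2 \<longleftrightarrow> (\<forall>T1. tm_wf T1 \<longrightarrow> (\<exists>\<tau> t. simulates T2 T1 \<tau> t))"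

end

theory Submission
  imports Defs
begin

definition nb :: "tape \<Rightarrow> nat" where
  "nb t = length (filter (\<lambda>x. x \<noteq> bl) (rev (fst t) @ snd t))"

lemma nb_tmove: "nb t \<le> Suc (nb (tmove d b t))"
  by (cases t; cases d; rename_tac l r; case_tac l; case_tac r; auto simp: nb_def tmove_def)

lemma nb_step2: "nb (fst (snd c)) \<le> Suc (nb (fst (snd (step2 M c))))"
proof -
  obtain q t1 t2 where c: "c = (q, t1, t2)" by (cases c) auto
  show ?thesis
    using nb_tmove[of t1]
    by (auto simp: c step2_def split: prod.splits)
qed

lemma nb_iter: "nb (fst (snd c)) \<le> j + nb (fst (snd ((step2 M ^^ j) c)))"
proof (induction j)
  case 0 then show ?case by simp
next
  case (Suc j)
  have "nb (fst (snd ((step2 M ^^ j) c))) \<le> Suc (nb (fst (snd ((step2 M ^^ Suc j) c))))"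
    using nb_step2[of "(step2 M ^^ j) c" M] by (simp only: funpow.simps comp_def)
  with Suc.IH show ?case by linarith
qed

lemma trim_nil: "trim w = [] \<Longrightarrow> \<forall>x\<in>set w. x = bl"
proof -
  assume a: "trim w = []"
  have "dropWhile (\<lambda>x. x = bl) (rev (dropWhile (\<lambda>x. x = bl) w)) = []"
    using a unfolding trim_def by (metis Nil_is_rev_conv)
  then have "\<forall>x\<in>set (rev (dropWhile (\<lambda>x. x = bl) w)). x = bl"
    by (simp only: dropWhile_eq_Nil_conv)
  then have h: "\<forall>x\<in>set (dropWhile (\<lambda>x. x = bl) w). x = bl" by (simp only: set_rev)
  show ?thesis
  proof
    fix x assume "x \<in> set w"
    then have "x \<in> set (takeWhile (\<lambda>x. x = bl) w) \<or> x \<in> set (dropWhile (\<lambda>x. x = bl) w)"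
      by (metis Un_iff set_append takeWhile_dropWhile_id)
    then show "x = bl" using h set_takeWhileD[of x "\<lambda>x. x = bl" w] by blast
  qed
qed

lemma content_nil: "content t = [] \<Longrightarrow> nb t = 0"
proof -
  assume "content t = []"
  then have "\<forall>x\<in>set (rev (fst t) @ snd t). x = bl" unfolding content_def by (rule trim_nil)
  then show ?thesis unfolding nb_def by (simp add: filter_empty_conv)
qed

lemma erase_bound:
  assumes "runs_within M w k out True" and "\<forall>x\<in>set w. x \<noteq> bl"
  shows "length w \<le> k"
proof -
  have "\<exists>j \<le> k. (case (step2 M ^^ j) (init2 M w) of (q, t1, t2) \<Rightarrow>
        q \<in> halting2 M \<and> content t2 = out \<and> (True \<longrightarrow> content t1 = []))"
    using assms(1) unfolding runs_within_def .
  then obtain j where jh: "j \<le> k \<and> (case (step2 M ^^ j) (init2 M w) of (q, t1, t2) \<Rightarrow>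
        q \<in> halting2 M \<and> content t2 = out \<and> (True \<longrightarrow> content t1 = []))"
    by (rule exE)
  note j = conjunct1[OF jh] and h = conjunct2[OF jh]
  obtain q t1 t2 where eq: "(step2 M ^^ j) (init2 M w) = (q, t1, t2)" by (cases "(step2 M ^^ j) (init2 M w)") auto
  have "content (fst (snd ((step2 M ^^ j) (init2 M w)))) = []"
    using h unfolding eq by simp
  then have "nb (fst (snd ((step2 M ^^ j) (init2 M w)))) = 0" by (rule content_nil)
  moreover have "nb (fst (snd (init2 M w))) = length w"
    using assms(2) by (simp add: nb_def init2_def filter_id_conv)
  ultimately show ?thesis using nb_iter[of "init2 M w" j M] j by simp
qed

lemma length_cword: "length (cword x) = csize x"
  by (cases x) (auto simp: cword_def csize_def)

lemma cword_nonbl: "\<forall>y\<in>set (cword x). y \<noteq> bl"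
  by (cases x) (auto simp: cword_def)

lemma finite_bounded_configs:
  assumes "tm_wf T" shows "finite {x \<in> configs T. csize x \<le> B}"
proof -
  let ?A = "{xs. set xs \<subseteq> symbols T \<and> length xs \<le> B}"
  have fA: "finite ?A" using assms by (intro finite_lists_length_le) (simp add: tm_wf_def)
  have "{x \<in> configs T. csize x \<le> B} \<subseteq> ?A \<times> states T \<times> ?A"
    by (auto simp: configs_def csize_def)
  moreover have "finite (?A \<times> states T \<times> ?A)" using fA assms by (simp add: tm_wf_def)
  ultimately show ?thesis by (rule finite_subset)
qed

lemma step_halting_fix: "is_halting T x \<Longrightarrow> step T x = x"
  by (cases x) (auto simp: step_def is_halting_def)

lemma funpow_fix: "f x = x \<Longrightarrow> (f ^^ n) x = x"
  by (induction n) auto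

lemma core:
  assumes wf: "tm_wf T2"
    and domD: "dom D \<subseteq> configs T2" and ranD: "ran D \<subseteq> configs T1"
    and sim: "\<forall>s \<in> configs T1. D (E s) = Some s
         \<and> (\<forall>x. D x = Some s \<longrightarrow> D ((step T2 ^^ the (\<tau> x)) x) = Some (step T1 s))"
    and bnd: "\<And>x v. D x = Some v \<Longrightarrow> v = s \<or> v = step T1 s \<Longrightarrow> csize x \<le> Bd"
    and s: "s \<in> configs T1" "step T1 (step T1 s) = s" "step T1 s \<noteq> s"
  shows "\<exists>y. y \<in> configs T2 \<and> \<not> is_halting T2 y \<and> (\<exists>P>0. (step T2 ^^ P) y = y)
           \<and> (D y = Some s \<or> D y = Some (step T1 s))"
proof -
  define F where "F = (\<lambda>x. (step T2 ^^ the (\<tau> x)) x)"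
  define X where "X = (\<lambda>k. (F ^^ k) (E s))"
  have XS: "X (Suc k) = F (X k)" for k by (simp add: X_def)
  have orb: "(step T1 ^^ k) s = s \<or> (step T1 ^^ k) s = step T1 s" for k
  proof (induction k)
    case 0 then show ?case by simp
  next
    case (Suc k) then show ?case using s(2) by auto
  qed
  have DX: "D (X k) = Some ((step T1 ^^ k) s)" for k
  proof (induction k)
    case 0 then show ?case using sim s(1) by (simp add: X_def)
  next
    case (Suc k)
    have "(step T1 ^^ k) s \<in> ran D" using Suc by (metis ranI)
    then have "(step T1 ^^ k) s \<in> configs T1" using ranD by blast
    from bspec[OF sim this] have "\<forall>x. D x = Some ((step T1 ^^ k) s) \<longrightarrow> D (F x) = Some (step T1 ((step T1 ^^ k) s))"
      unfolding F_def by blast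
    then have "D (F (X k)) = Some (step T1 ((step T1 ^^ k) s))" using Suc by blast
    then show ?case by (simp add: XS)
  qed
  have neq: "X (Suc k) \<noteq> X k" for k
  proof
    assume "X (Suc k) = X k"
    then have "(step T1 ^^ Suc k) s = (step T1 ^^ k) s" using DX[of k] DX[of "Suc k"] by simp
    then show False using orb[of k] s by auto
  qed
  have inC: "X k \<in> {x \<in> configs T2. csize x \<le> Bd}" for k
  proof -
    have "X k \<in> dom D" using DX by blast
    then have "X k \<in> configs T2" using domD by blast
    moreover have "csize (X k) \<le> Bd" using bnd[OF DX[of k]] orb[of k] by blast
    ultimately show ?thesis by simp
  qed
  have "finite (range X)"
    by (rule finite_subset[OF _ finite_bounded_configs[OF wf, of Bd]]) (use inC in blast)
  then have "\<not> inj X" using finite_imageD infinite_UNIV_nat by blast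
  then obtain i j where ij: "X i = X j" "i \<noteq> j" unfolding inj_def by blast
  then obtain i j where ij: "X i = X j" "i < j"
    by (metis linorder_neqE_nat)
  have shift: "X (i + d) = (step T2 ^^ (\<Sum>m\<in>{i..<i+d}. the (\<tau> (X m)))) (X i)" for d
  proof (induction d)
    case 0 then show ?case by simp
  next
    case (Suc d)
    have "X (i + Suc d) = (step T2 ^^ the (\<tau> (X (i+d)))) (X (i+d))"
      by (simp add: XS F_def)
    also have "\<dots> = (step T2 ^^ (the (\<tau> (X (i+d))) + (\<Sum>m\<in>{i..<i+d}. the (\<tau> (X m))))) (X i)"
      using Suc by (simp add: funpow_add)
    finally show ?case by (simp add: add.commute)
  qed
  define P where "P = (\<Sum>m\<in>{i..<j}. the (\<tau> (X m)))"
  have per: "(step T2 ^^ P) (X i) = X i"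
    using shift[of "j - i"] ij by (simp add: P_def)
  have Ppos: "P > 0"
  proof (rule ccontr)
    assume "\<not> P > 0"
    then have "the (\<tau> (X i)) = 0" using ij(2) by (simp add: P_def)
    then have "X (Suc i) = X i" by (simp add: XS F_def)
    then show False using neq by blast
  qed
  have nh: "\<not> is_halting T2 (X i)"
  proof
    assume "is_halting T2 (X i)"
    then have "X (Suc i) = X i" by (simp add: XS F_def step_halting_fix funpow_fix)
    then show False using neq by blast
  qed
  show ?thesis
    apply (rule exI[of _ "X i"])
    using inC[of i] nh per Ppos DX[of i] orb[of i] by auto
qed

definition osc :: tm where
  "osc = \<lparr>states = {0,1,2}, symbols = {0,1}, blank = 0, start = 0, halting = {2},
          delta = (\<lambda>q a. if q = 0 then (1, a, MoveR) else (0, a, MoveL))\<rparr>"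

definition sN :: "nat \<Rightarrow> config" where
  "sN n = ([], 0, replicate (n+2) 0)"

lemma osc_wf: "tm_wf osc"
  by (auto simp: tm_wf_def osc_def)

lemma osc_step1: "step osc (sN n) = ([0], 1, replicate (n+1) 0)"
  by (simp add: step_def osc_def sN_def)

lemma osc_step2: "step osc (step osc (sN n)) = sN n"
  by (simp add: osc_step1) (simp add: step_def osc_def sN_def)

lemma osc_neq: "step osc (sN n) \<noteq> sN n"
  by (simp only: osc_step1) (simp add: sN_def)

lemma osc_conf: "sN n \<in> configs osc"
  by (auto simp: sN_def configs_def osc_def)

lemma osc_size: "csize (sN n) = n + 3" "csize (step osc (sN n)) = n + 3"
  by (simp_all add: osc_step1) (simp_all add: sN_def csize_def)

lemma periodic_points:
  assumes wf: "tm_wf T2" and un: "universal T2"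
  shows "\<exists>y :: nat \<Rightarrow> config. \<forall>n. y n \<in> configs T2 \<and> \<not> is_halting T2 (y n) \<and> (\<exists>P>0. (step T2 ^^ P) (y n) = y n)
          \<and> inj y"
proof -
  obtain \<tau> t where "simulates T2 osc \<tau> t" using un osc_wf unfolding universal_def by blast
  then obtain E D where
    domD: "dom D \<subseteq> configs T2" and ranD: "ran D \<subseteq> configs osc" and dec: "decoder_ok D t"
    and sim: "\<forall>s \<in> configs osc. D (E s) = Some s
         \<and> (\<forall>x. D x = Some s \<longrightarrow> D ((step T2 ^^ the (\<tau> x)) x) = Some (step osc s))"
    unfolding simulates_def by blast
  obtain M c n0 where
    hM: "\<forall>x \<in> dom D. csize (the (D x)) \<ge> n0 \<longrightarrow>
            runs_within M (cword x) (c * t (csize (the (D x)))) (cword (the (D x))) True"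
    using dec unfolding decoder_ok_def by blast
  have hb: "csize x \<le> c * t (csize v)" if "D x = Some v" "n0 \<le> csize v" for x v
  proof -
    have "runs_within M (cword x) (c * t (csize v)) (cword v) True"
      using hM that by (metis domI option.sel)
    from erase_bound[OF this cword_nonbl] show ?thesis by (simp add: length_cword)
  qed
  have ex: "\<exists>y. y \<in> configs T2 \<and> \<not> is_halting T2 y \<and> (\<exists>P>0. (step T2 ^^ P) y = y)
           \<and> (D y = Some (sN (n0 + n)) \<or> D y = Some (step osc (sN (n0 + n))))" for n
  proof (rule core[OF wf domD ranD sim, where Bd = "c * t (n0 + n + 3)"])
    fix x v assume "D x = Some v" "v = sN (n0 + n) \<or> v = step osc (sN (n0 + n))"
    then show "csize x \<le> c * t (n0 + n + 3)" using hb[of x v] osc_size[of "n0+n"] by auto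
  qed (auto simp: osc_conf osc_step2 osc_neq)
  then obtain y where y: "\<And>n. y n \<in> configs T2 \<and> \<not> is_halting T2 (y n) \<and> (\<exists>P>0. (step T2 ^^ P) (y n) = y n)
           \<and> (D (y n) = Some (sN (n0 + n)) \<or> D (y n) = Some (step osc (sN (n0 + n))))"
    by metis
  have sz: "csize (the (D (y n))) = n0 + n + 3" for n
    using y[of n] osc_size[of "n0+n"] by auto
  have "inj y"
  proof
    fix a b assume "y a = y b"
    then have "csize (the (D (y a))) = csize (the (D (y b)))" by simp
    then show "a = b" unfolding sz by simp
  qed
  then show ?thesis using y by (intro exI[of _ y]) simp
qed

lemma orbit_finite:
  assumes "P > 0" "(step T ^^ P) y = y"
  shows "finite (orbit T y)"
proof -
  have "orbit T y \<subseteq> (\<lambda>k. (step T ^^ k) y) ` {..<P}"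
  proof
    fix z assume "z \<in> orbit T y"
    then obtain k where "z = (step T ^^ k) y" by (auto simp: orbit_def)
    then have "z = (step T ^^ (k mod P)) y" using funpow_mod_eq[where f="step T" and n=P and x=y and m=k] assms by simp
    then show "z \<in> (\<lambda>k. (step T ^^ k) y) ` {..<P}" using assms by auto
  qed
  then show ?thesis by (rule finite_subset) simp
qed

lemma in_orbit: "y \<in> orbit T y"
  unfolding orbit_def by (auto intro: exI[of _ 0])

theorem lemma3p10:
  fixes T2 :: tm
  assumes "tm_wf T2" and "universal T2"
  shows "(\<exists>s \<in> configs T2. \<not> is_halting T2 s \<and> (\<exists>p > 0. (step T2 ^^ p) s = s))
       \<and> (\<forall>N::nat. \<exists>L > 0. \<exists>xs :: config list. length xs = N
            \<and> distinct (map (orbit T2) xs)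
            \<and> (\<forall>x \<in> set xs. x \<in> configs T2 \<and> \<not> is_halting T2 x \<and> (step T2 ^^ L) x = x))"
proof -
  obtain y :: "nat \<Rightarrow> config" where y: "\<And>n. y n \<in> configs T2 \<and> \<not> is_halting T2 (y n) \<and> (\<exists>P>0. (step T2 ^^ P) (y n) = y n)"
    and iy: "inj y"
    using periodic_points[OF assms] by blast
  have part2: "\<exists>L > 0. \<exists>xs :: config list. length xs = N
            \<and> distinct (map (orbit T2) xs)
            \<and> (\<forall>x \<in> set xs. x \<in> configs T2 \<and> \<not> is_halting T2 x \<and> (step T2 ^^ L) x = x)
            \<and> (\<forall>x \<in> set xs. finite (orbit T2 x))" for N
  proof (induction N)
    case 0 show ?case by (rule exI[of _ 1]) simp
  next
    case (Suc N)
    then obtain L xs where L: "L > 0" "length xs = N" "distinct (map (orbit T2) xs)"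
      "\<forall>x \<in> set xs. x \<in> configs T2 \<and> \<not> is_halting T2 x \<and> (step T2 ^^ L) x = x"
      "\<forall>x \<in> set xs. finite (orbit T2 x)" by blast
    have "finite (\<Union>x\<in>set xs. orbit T2 x)" using L(5) by blast
    moreover have "infinite (range y)" using iy finite_imageD infinite_UNIV_nat by blast
    ultimately have "\<not> range y \<subseteq> (\<Union>x\<in>set xs. orbit T2 x)"
      using finite_subset by blast
    then obtain n where n: "y n \<notin> (\<Union>x\<in>set xs. orbit T2 x)"
      by blast
    obtain P where P: "P > 0" "(step T2 ^^ P) (y n) = y n" using y[of n] by blast
    have new: "orbit T2 (y n) \<notin> orbit T2 ` set xs"
      using n in_orbit[of "y n" T2] by auto
    have fixL: "(step T2 ^^ (L * P)) x = x" if "(step T2 ^^ L) x = x" for x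
      using funpow_fix[of "step T2 ^^ L" x P] that by (simp add: funpow_mult)
    have fixP: "(step T2 ^^ (L * P)) (y n) = y n"
      using funpow_fix[of "step T2 ^^ P" "y n" L] P by (simp add: funpow_mult mult.commute)
    show ?case
    proof (intro exI conjI)
      show "L * P > 0" using L P by simp
      show "length (y n # xs) = Suc N" using L by simp
      show "distinct (map (orbit T2) (y n # xs))" using L new by simp
      show "\<forall>x \<in> set (y n # xs). x \<in> configs T2 \<and> \<not> is_halting T2 x \<and> (step T2 ^^ (L * P)) x = x"
        using L(4) fixL fixP y[of n] by auto
      show "\<forall>x \<in> set (y n # xs). finite (orbit T2 x)"
        using L(5) orbit_finite[OF P] by auto
    qed
  qed
  show ?thesis
  proof
    show "\<exists>s \<in> configs T2. \<not> is_halting T2 s \<and> (\<exists>p > 0. (step T2 ^^ p) s = s)"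
      using y[of 0] by (intro bexI[of _ "y 0"]) auto
    show "\<forall>N::nat. \<exists>L > 0. \<exists>xs :: config list. length xs = N
            \<and> distinct (map (orbit T2) xs)
            \<and> (\<forall>x \<in> set xs. x \<in> configs T2 \<and> \<not> is_halting T2 x \<and> (step T2 ^^ L) x = x)"
    proof
      fix N :: nat
      obtain L xs where h: "L > 0" "length xs = N" "distinct (map (orbit T2) xs)"
        "\<forall>x \<in> set xs. x \<in> configs T2 \<and> \<not> is_halting T2 x \<and> (step T2 ^^ L) x = x"
        using part2[of N] by auto
      show "\<exists>L > 0. \<exists>xs :: config list. length xs = N
            \<and> distinct (map (orbit T2) xs)
            \<and> (\<forall>x \<in> set xs. x \<in> configs T2 \<and> \<not> is_halting T2 x \<and> (step T2 ^^ L) x = x)"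
        by (rule exI[of _ L], rule conjI[OF h(1)], rule exI[of _ xs]) (use h in simp)
    qed
  qed
qed

end
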